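(* Let $n,k,j,i$ be integers with $n \geq k > 0$, $0 \le j < n$, and $i \geq 1$. Then $$f_{(n,k) \setminus (j),i}(q) = q^{i^2} \left( \begin{bmatrix} n-j \\ i \end{bmatrix}_q \begin{bmatrix} k \\ i \end{bmatrix}_q - \begin{bmatrix} n+1 \\ i \end{bmatrix}_q \begin{bmatrix} k-j-1 \\ i \end{bmatrix}_q \right).$$
   Context: For partitions $\mu\subseteq\lambda$, the skew shape $\lambda\setminus\mu$ is the set of boxes of the Ferrers diagram of $\lambda$ (row $r$ has $\lambda_r$ left-justified boxes, rows numbered top to bottom) not in that of $\mu$. Thus $(n,k)\setminus(j)$ has a top row occupying columns $j+1,\dots,n$ and a bottom row occupying columns $1,\dots,k$. A standard Young tableau of shape $\lambda\setminus\mu$ with $N$ boxes is a filling with $1,\dots,N$, each used once, increasing left to right along rows and top to bottom down columns. Such a tableau $\tau$ has a descent at $m$ ($1\le m\le N-1$) if $m+1$ lies in a strictly lower row than $m$; $\mathrm{des}(\tau)$ is the number of descents and $\mathrm{maj}(\tau)$ is the sum of the descents. $f_{\lambda\setminus\mu,i}(q)=\sum_{\tau} q^{\mathrm{maj}(\tau)}$, summed over standard Young tableaux $\tau$ of shape $\lambda\setminus\mu$ with $\mathrm{des}(\tau)=i$ (for $\mu=\emptyset$ write $f_{\lambda,i}$). The $q$-binomial coefficient is $\begin{bmatrix} M \\ N \end{bmatrix}_q = \frac{(q)_M}{(q)_N(q)_{M-N}}$ with $(q)_m=(1-q)\cdots(1-q^m)$ when $0\le N\le M$ are integers, and $\begin{bmatrix}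 M \\ N \end{bmatrix}_q =0$ otherwise. *)

theory Defs
  imports "HOL-Computational_Algebra.Polynomial"
begin

text \<open>Boxes are pairs (row, column), 0-indexed; rows are numbered top to bottom.
  Partitions are given as lists of (weakly decreasing) row lengths.\<close>

definition skew_shape :: "nat list \<Rightarrow> nat list \<Rightarrow> (nat \<times> nat) set" where
  "skew_shape lam mu =
     {(r, c). r < length lam \<and> c < lam ! r \<and> \<not> (r < length mu \<and> c < mu ! r)}"

definition SYT :: "(nat \<times> nat) set \<Rightarrow> ((nat \<times> nat) \<Rightarrow> nat) set" where
  "SYT B = {T. bij_betw T B {1..card B}
              \<and> (\<forall>x. x \<notin> B \<longrightarrow> T x = 0)
              \<and> (\<forall>r c c'. (r, c) \<in> B \<longrightarrow> (r, c') \<in> B \<longrightarrow> c < c' \<longrightarrow> T (r, c) < T (r, c'))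
              \<and> (\<forall>r r' c. (r, c) \<in> B \<longrightarrow> (r', c) \<in> B \<longrightarrow> r < r' \<longrightarrow> T (r, c) < T (r', c))}"

definition row_of :: "(nat \<times> nat) set \<Rightarrow> ((nat \<times> nat) \<Rightarrow> nat) \<Rightarrow> nat \<Rightarrow> nat" where
  "row_of B T m = fst (inv_into B T m)"

definition descents :: "(nat \<times> nat) set \<Rightarrow> ((nat \<times> nat) \<Rightarrow> nat) \<Rightarrow> nat set" where
  "descents B T = {m. 1 \<le> m \<and> m + 1 \<le> card B \<and> row_of B T m < row_of B T (m + 1)}"

definition des :: "(nat \<times> nat) set \<Rightarrow> ((nat \<times> nat) \<Rightarrow> nat) \<Rightarrow> nat" where
  "des B T = card (descents B T)"

definition maj :: "(nat \<times> nat) set \<Rightarrow> ((nat \<times> nat) \<Rightarrow> nat) \<Rightarrow> nat" where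
  "maj B T = \<Sum> (descents B T)"

definition f_skew :: "nat list \<Rightarrow> nat list \<Rightarrow> nat \<Rightarrow> int poly" where
  "f_skew lam mu i =
     (let B = skew_shape lam mu in
      \<Sum>T \<in> {T \<in> SYT B. des B T = i}. monom 1 (maj B T))"

definition qpoch :: "nat \<Rightarrow> int poly" where
  "qpoch m = (\<Prod>l = 1..m. 1 - monom 1 l)"

definition qbinom :: "int \<Rightarrow> int \<Rightarrow> int poly" where
  "qbinom M N =
     (if 0 \<le> N \<and> N \<le> M
      then qpoch (nat M) div (qpoch (nat N) * qpoch (nat (M - N)))
      else 0)"

end

theory Submission
  imports Defs
begin


lemma finite_SYT: "finite B \<Longrightarrow> finite (SYT B)"
proof -
  assume fB: "finite B"
  have "SYT B \<subseteq> {f. \<forall>x. (x \<in> B \<longrightarrow> f x \<in> {1..card B}) \<and> (x \<notin> B \<longrightarrow> f x = 0)}"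
    unfolding SYT_def bij_betw_def by auto
  moreover have "finite {f. \<forall>x. (x \<in> B \<longrightarrow> f x \<in> {1..card B}) \<and> (x \<notin> B \<longrightarrow> f x = (0::nat))}"
    by (rule finite_set_of_finite_funs) (use fB in auto)
  ultimately show ?thesis by (rule finite_subset)
qed

lemma SYT_remove:
  assumes fB: "finite B" and bB: "b \<in> B" and T: "T \<in> SYT B" and Tb: "T b = card B"
  shows "T(b:=0) \<in> SYT (B - {b})"
proof -
  have cB: "card (B - {b}) = card B - 1" using fB bB by simp
  have bij: "bij_betw T B {1..card B}" using T unfolding SYT_def by blast
  have "card B \<noteq> 0" using fB bB by auto
  hence pos: "1 \<le> card B" by linarith
  have bs: "bij_betw T {b} {card B}" using Tb by simp
  have s1: "{b} \<subseteq> B" using bB by simp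
  have s2: "{card B} \<subseteq> {1..card B}" using pos by simp
  have "bij_betw T (B - {b}) ({1..card B} - {card B})"
    by (rule bij_betw_DiffI[OF bij bs s1 s2])
  moreover have "{1..card B} - {card B} = {1..card (B - {b})}" using cB by auto
  ultimately have "bij_betw T (B - {b}) {1..card (B - {b})}" by simp
  hence B1: "bij_betw (T(b:=0)) (B - {b}) {1..card (B - {b})}"
    by (rule bij_betw_cong[THEN iffD1, rotated]) simp
  have Z: "\<forall>x. x \<notin> B - {b} \<longrightarrow> (T(b:=0)) x = 0"
  proof (intro allI impI)
    fix x assume "x \<notin> B - {b}"
    moreover have "\<forall>x. x \<notin> B \<longrightarrow> T x = 0" using T unfolding SYT_def by blast
    show "(T(b:=0)) x = 0"
    proof (cases "x = b")
      case False
      hence "T x = 0" using \<open>x \<notin> B - {b}\<close> \<open>\<forall>x. x \<notin> B \<longrightarrow> T x = 0\<close> by blast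
      thus ?thesis using False by simp
    qed simp
  qed
  have R: "\<forall>r c c'. (r, c) \<in> B - {b} \<longrightarrow> (r, c') \<in> B - {b} \<longrightarrow> c < c' \<longrightarrow> (T(b:=0)) (r, c) < (T(b:=0)) (r, c')"
  proof (intro allI impI)
    fix r c c' assume a: "(r, c) \<in> B - {b}" "(r, c') \<in> B - {b}" "c < c'"
    have "\<forall>r c c'. (r, c) \<in> B \<longrightarrow> (r, c') \<in> B \<longrightarrow> c < c' \<longrightarrow> T (r, c) < T (r, c')"
      using T unfolding SYT_def by blast
    hence "T (r, c) < T (r, c')" using a by blast
    moreover have "(r,c) \<noteq> b" "(r,c') \<noteq> b" using a by auto
    ultimately show "(T(b:=0)) (r, c) < (T(b:=0)) (r, c')" by simp
  qed
  have C: "\<forall>r r' c. (r, c) \<in> B - {b} \<longrightarrow> (r', c) \<in> B - {b} \<longrightarrow> r < r' \<longrightarrow> (T(b:=0)) (r, c) < (T(b:=0)) (r', c)"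
  proof (intro allI impI)
    fix r r' c assume a: "(r, c) \<in> B - {b}" "(r', c) \<in> B - {b}" "r < r'"
    have "\<forall>r r' c. (r, c) \<in> B \<longrightarrow> (r', c) \<in> B \<longrightarrow> r < r' \<longrightarrow> T (r, c) < T (r', c)"
      using T unfolding SYT_def by blast
    hence "T (r, c) < T (r', c)" using a by blast
    moreover have "(r,c) \<noteq> b" "(r',c) \<noteq> b" using a by auto
    ultimately show "(T(b:=0)) (r, c) < (T(b:=0)) (r', c)" by simp
  qed
  show ?thesis unfolding SYT_def using B1 Z R C by blast
qed

lemma SYT_add:
  assumes fB: "finite B" and bB: "b \<notin> B" and T: "T \<in> SYT B"
    and corner: "\<And>x. x \<in> B \<Longrightarrow> \<not>(fst x = fst b \<and> snd x > snd b) \<and> \<not>(snd x = snd b \<and> fst x > fst b)"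
  shows "T(b:= Suc (card B)) \<in> SYT (insert b B)"
proof -
  have bij: "bij_betw T B {1..card B}" using T unfolding SYT_def by blast
  have cB: "card (insert b B) = Suc (card B)" using fB bB by simp
  have bij2: "bij_betw (T(b:= Suc (card B))) B {1..card B}"
    by (rule bij_betw_cong[THEN iffD1, OF _ bij]) (use bB in auto)
  have "bij_betw (T(b:= Suc (card B))) (B \<union> {b}) ({1..card B} \<union> {(T(b:= Suc (card B))) b})"
    by (rule notIn_Un_bij_betw[OF bB _ bij2]) auto
  moreover have "{1..card B} \<union> {(T(b:= Suc (card B))) b} = {1..card (insert b B)}" using cB by auto
  ultimately have B1: "bij_betw (T(b:= Suc (card B))) (insert b B) {1..card (insert b B)}" by simp
  have le: "\<And>x. x \<in> B \<Longrightarrow> T x \<le> card B" using bij unfolding bij_betw_def by auto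
  have Z: "\<forall>x. x \<notin> insert b B \<longrightarrow> (T(b := Suc (card B))) x = 0"
  proof (intro allI impI)
    fix x assume "x \<notin> insert b B"
    moreover have "\<forall>x. x \<notin> B \<longrightarrow> T x = 0" using T unfolding SYT_def by blast
    ultimately have "T x = 0" "x \<noteq> b" by blast+
    thus "(T(b := Suc (card B))) x = 0" by simp
  qed
  have R: "\<forall>r c c'. (r, c) \<in> insert b B \<longrightarrow> (r, c') \<in> insert b B \<longrightarrow> c < c' \<longrightarrow> (T(b := Suc (card B))) (r, c) < (T(b := Suc (card B))) (r, c')"
  proof (intro allI impI)
    fix r c c' assume a: "(r, c) \<in> insert b B" "(r, c') \<in> insert b B" "c < c'"
    have mono: "\<forall>r c c'. (r, c) \<in> B \<longrightarrow> (r, c') \<in> B \<longrightarrow> c < c' \<longrightarrow> T (r, c) < T (r, c')"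
      using T unfolding SYT_def by blast
    show "(T(b := Suc (card B))) (r, c) < (T(b := Suc (card B))) (r, c')"
    proof (cases "b = (r,c')")
      case True
      hence "(r,c) \<in> B" using a by auto
      hence "T (r,c) \<le> card B" by (rule le)
      moreover have "(r,c) \<noteq> b" "(r,c') = b" using True a(3) by auto
      ultimately show ?thesis by simp
    next
      case False
      hence B2: "(r,c') \<in> B" using a by auto
      have "b \<noteq> (r,c)" using corner[OF B2] a(3) by auto
      hence "(r,c) \<in> B" using a by auto
      hence "T (r,c) < T (r,c')" using mono B2 a(3) by blast
      moreover have "(r,c) \<noteq> b" "(r,c') \<noteq> b" using False \<open>b \<noteq> (r,c)\<close> by auto
      ultimately show ?thesis by simp
    qed
  qed
  have C: "\<forall>r r' c. (r, c) \<in> insert b B \<longrightarrow> (r', c) \<in> insert b B \<longrightarrow> r < r' \<longrightarrow> (T(b := Suc (card B))) (r, c) < (T(b := Suc (card B))) (r', c)"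
  proof (intro allI impI)
    fix r r' c assume a: "(r, c) \<in> insert b B" "(r', c) \<in> insert b B" "r < r'"
    have mono: "\<forall>r r' c. (r, c) \<in> B \<longrightarrow> (r', c) \<in> B \<longrightarrow> r < r' \<longrightarrow> T (r, c) < T (r', c)"
      using T unfolding SYT_def by blast
    show "(T(b := Suc (card B))) (r, c) < (T(b := Suc (card B))) (r', c)"
    proof (cases "b = (r',c)")
      case True
      hence "(r,c) \<in> B" using a by auto
      hence "T (r,c) \<le> card B" by (rule le)
      moreover have "(r,c) \<noteq> b" "(r',c) = b" using True a(3) by auto
      ultimately show ?thesis by simp
    next
      case False
      hence B2: "(r',c) \<in> B" using a by auto
      have "b \<noteq> (r,c)" using corner[OF B2] a(3) by auto
      hence "(r,c) \<in> B" using a by auto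
      hence "T (r,c) < T (r',c)" using mono B2 a(3) by blast
      moreover have "(r,c) \<noteq> b" "(r',c) \<noteq> b" using False \<open>b \<noteq> (r,c)\<close> by auto
      ultimately show ?thesis by simp
    qed
  qed
  show ?thesis unfolding SYT_def using B1 Z R C by blast
qed


lemma row_of_add:
  assumes fB: "finite B" and bB: "b \<notin> B" and T: "T \<in> SYT B"
    and T': "T(b:= Suc (card B)) \<in> SYT (insert b B)"
    and m: "1 \<le> m" "m \<le> card B"
  shows "row_of (insert b B) (T(b:= Suc (card B))) m = row_of B T m"
proof -
  have bij: "bij_betw T B {1..card B}" using T unfolding SYT_def by blast
  have bij': "bij_betw (T(b:= Suc (card B))) (insert b B) {1..card (insert b B)}"
    using T' unfolding SYT_def by blast
  have mi: "m \<in> T ` B" using bij m unfolding bij_betw_def by auto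
  define x where "x = inv_into B T m"
  have xB: "x \<in> B" unfolding x_def by (rule inv_into_into[OF mi])
  have Tx: "T x = m" unfolding x_def by (rule f_inv_into_f[OF mi])
  have "x \<noteq> b" using xB bB by auto
  hence "(T(b:= Suc (card B))) x = m" using Tx by simp
  hence "inv_into (insert b B) (T(b:= Suc (card B))) m = x"
    by (intro inv_into_f_eq) (use bij' xB bij_betw_def in auto)
  thus ?thesis unfolding row_of_def x_def by simp
qed

lemma row_of_add_top:
  assumes T': "T(b:= Suc (card B)) \<in> SYT (insert b B)"
  shows "row_of (insert b B) (T(b:= Suc (card B))) (Suc (card B)) = fst b"
proof -
  have bij': "bij_betw (T(b:= Suc (card B))) (insert b B) {1..card (insert b B)}"
    using T' unfolding SYT_def by blast
  have "inv_into (insert b B) (T(b:= Suc (card B))) (Suc (card B)) = b"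
    by (intro inv_into_f_eq) (use bij' bij_betw_def in auto)
  thus ?thesis unfolding row_of_def by simp
qed

lemma descents_add:
  assumes fB: "finite B" and bB: "b \<notin> B" and T: "T \<in> SYT B"
    and T': "T(b:= Suc (card B)) \<in> SYT (insert b B)"
  shows "descents (insert b B) (T(b:= Suc (card B))) =
    descents B T \<union> (if 1 \<le> card B \<and> row_of B T (card B) < fst b then {card B} else {})"
proof -
  have cB: "card (insert b B) = Suc (card B)" using fB bB by simp
  let ?T = "T(b:= Suc (card B))"
  have RA: "\<And>m. 1 \<le> m \<Longrightarrow> m \<le> card B \<Longrightarrow> row_of (insert b B) ?T m = row_of B T m"
    by (rule row_of_add[OF fB bB T T'])
  have RT: "row_of (insert b B) ?T (Suc (card B)) = fst b" by (rule row_of_add_top[OF T'])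
  show ?thesis
  proof (rule set_eqI)
    fix m
    show "m \<in> descents (insert b B) ?T \<longleftrightarrow>
       m \<in> descents B T \<union> (if 1 \<le> card B \<and> row_of B T (card B) < fst b then {card B} else {})"
    proof (cases "m + 1 \<le> card B")
      case True
      hence "m \<noteq> card B" by simp
      moreover have "1 \<le> m \<Longrightarrow> row_of (insert b B) ?T m = row_of B T m" using True by (intro RA) auto
      moreover have "1 \<le> m \<Longrightarrow> row_of (insert b B) ?T (m+1) = row_of B T (m+1)" using True by (intro RA) auto
      ultimately show ?thesis using True unfolding descents_def cB by auto
    next
      case False
      show ?thesis
      proof (cases "m = card B")
        case True
        have "1 \<le> m \<Longrightarrow> row_of (insert b B) ?T m = row_of B T m" using True by (intro RA) auto
        thus ?thesis using True RT unfolding descents_def cB by auto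
      next
        case False2: False
        thus ?thesis using False unfolding descents_def cB by auto
      qed
    qed
  qed
qed




lemma mem_Bs: "(r, c) \<in> skew_shape [n, k] [j] \<longleftrightarrow> (r = 0 \<and> j \<le> c \<and> c < n) \<or> (r = 1 \<and> c < k)"
  unfolding skew_shape_def by (cases r) (auto simp: nth_Cons split: nat.splits)

lemma Bs_eq: "skew_shape [n, k] [j] = (\<lambda>c. (0::nat, c)) ` {j..<n} \<union> (\<lambda>c. (1::nat, c)) ` {..<k}"
proof (rule set_eqI)
  fix x :: "nat \<times> nat"
  obtain r c where x: "x = (r, c)" by (cases x)
  show "x \<in> skew_shape [n, k] [j] \<longleftrightarrow> x \<in> (\<lambda>c. (0::nat, c)) ` {j..<n} \<union> (\<lambda>c. (1::nat, c)) ` {..<k}"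
    unfolding x mem_Bs by auto
qed

lemma finite_Bs: "finite (skew_shape [n, k] [j])"
  unfolding Bs_eq by simp

lemma card_Bs: "card (skew_shape [n, k] [j]) = (n - j) + k"
proof -
  have "card ((\<lambda>c. (0::nat, c)) ` {j..<n} \<union> (\<lambda>c. (1::nat, c)) ` {..<k})
      = card ((\<lambda>c. (0::nat, c)) ` {j..<n}) + card ((\<lambda>c. (1::nat, c)) ` {..<k})"
    by (rule card_Un_disjoint) auto
  also have "\<dots> = card {j..<n} + card {..<k}"
    by (subst card_image, simp add: inj_on_def)+ simp
  finally show ?thesis unfolding Bs_eq by simp
qed

lemma Bs_top: "j < n \<Longrightarrow> skew_shape [n, k] [j] = insert (0, n - 1) (skew_shape [n - 1, k] [j])"
  by (rule set_eqI, case_tac x) (auto simp: mem_Bs)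

lemma Bs_top_notin: "(0, n - 1) \<notin> skew_shape [n - 1, k] [j]"
  by (simp add: mem_Bs)

lemma Bs_bot: "0 < k \<Longrightarrow> skew_shape [n, k] [j] = insert (1, k - 1) (skew_shape [n, k - 1] [j])"
  by (rule set_eqI, case_tac x) (auto simp: mem_Bs)

lemma Bs_bot_notin: "(1, k - 1) \<notin> skew_shape [n, k - 1] [j]"
  by (simp add: mem_Bs)

lemma corner_top: "k < n \<Longrightarrow> x \<in> skew_shape [n - 1, k] [j] \<Longrightarrow>
  \<not>(fst x = fst (0::nat, n - 1) \<and> snd x > snd (0::nat, n - 1)) \<and> \<not>(snd x = snd (0::nat, n - 1) \<and> fst x > fst (0::nat, n - 1))"
  by (cases x) (auto simp: mem_Bs)

lemma corner_bot: "x \<in> skew_shape [n, k - 1] [j] \<Longrightarrow>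
  \<not>(fst x = fst (1::nat, k - 1) \<and> snd x > snd (1::nat, k - 1)) \<and> \<not>(snd x = snd (1::nat, k - 1) \<and> fst x > fst (1::nat, k - 1))"
  by (cases x) (auto simp: mem_Bs)

lemma gen_sum:
  assumes fB: "finite B" and bB: "b \<notin> B"
    and corner: "\<And>x. x \<in> B \<Longrightarrow> \<not>(fst x = fst b \<and> snd x > snd b) \<and> \<not>(snd x = snd b \<and> fst x > fst b)"
  shows "(\<Sum>T\<in>{T\<in>SYT (insert b B). T b = card (insert b B) \<and> Q T}. g T)
       = (\<Sum>T\<in>{T\<in>SYT B. Q (T(b:= Suc (card B)))}. g (T(b:= Suc (card B))))"
proof -
  have cB: "card (insert b B) = Suc (card B)" using fB bB by simp
  have rm: "insert b B - {b} = B" using bB by blast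
  have fB2: "finite (insert b B)" using fB by blast
  show ?thesis
  proof (rule sum.reindex_bij_witness[where i = "\<lambda>T. T(b:= Suc (card B))" and j = "\<lambda>T. T(b:=0)"])
    fix T assume "T \<in> {T\<in>SYT (insert b B). T b = card (insert b B) \<and> Q T}"
    hence T: "T \<in> SYT (insert b B)" "T b = card (insert b B)" "Q T" by blast+
    have Tb: "T b = Suc (card B)" using T(2) cB by simp
    hence "T(b:= Suc (card B)) = T" by (rule fun_upd_idem)
    thus "(T(b:=0))(b:= Suc (card B)) = T" by simp
    have "T(b:=0) \<in> SYT (insert b B - {b})"
      by (rule SYT_remove[OF fB2 insertI1 T(1) T(2)])
    hence "T(b:=0) \<in> SYT B" unfolding rm .
    moreover have "Q ((T(b:=0))(b:= Suc (card B)))" using T(3) \<open>T(b:= Suc (card B)) = T\<close> by simp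
    ultimately show "T(b:=0) \<in> {T\<in>SYT B. Q (T(b:= Suc (card B)))}" by blast
  next
    fix T assume "T \<in> {T\<in>SYT B. Q (T(b:= Suc (card B)))}"
    hence T: "T \<in> SYT B" "Q (T(b:= Suc (card B)))" by blast+
    have "\<forall>x. x \<notin> B \<longrightarrow> T x = 0" using T(1) unfolding SYT_def by blast
    hence "T b = 0" using bB by blast
    hence "T(b:=0) = T" by (rule fun_upd_idem)
    thus "(T(b:= Suc (card B)))(b:=0) = T" by simp
    have "T(b:= Suc (card B)) \<in> SYT (insert b B)" by (rule SYT_add[OF fB bB T(1) corner])
    moreover have "(T(b:= Suc (card B))) b = card (insert b B)" using cB by simp
    ultimately show "T(b:= Suc (card B)) \<in> {T\<in>SYT (insert b B). T b = card (insert b B) \<and> Q T}"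
      using T(2) by blast
  next
    fix T assume "T \<in> {T\<in>SYT (insert b B). T b = card (insert b B) \<and> Q T}"
    hence "T b = Suc (card B)" using cB by simp
    hence "T(b:= Suc (card B)) = T" by (rule fun_upd_idem)
    thus "g ((T(b:=0))(b:= Suc (card B))) = g T" by simp
  qed
qed




lemma sum_split:
  assumes "finite A"
  shows "sum g {x\<in>A. R x} = sum g {x\<in>A. R x \<and> P x} + sum g {x\<in>A. R x \<and> \<not> P x}"
proof -
  have "{x\<in>A. R x} = {x\<in>A. R x \<and> P x} \<union> {x\<in>A. R x \<and> \<not> P x}" by blast
  moreover have "sum g ({x\<in>A. R x \<and> P x} \<union> {x\<in>A. R x \<and> \<not> P x}) = sum g {x\<in>A. R x \<and> P x} + sum g {x\<in>A. R x \<and> \<not> P x}"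
    by (rule sum.union_disjoint) (use assms in auto)
  ultimately show ?thesis by simp
qed

lemma SYT_range:
  assumes "T \<in> SYT B" "x \<in> B" shows "1 \<le> T x" "T x \<le> card B"
proof -
  have "bij_betw T B {1..card B}" using assms(1) unfolding SYT_def by blast
  hence "T x \<in> {1..card B}" using assms(2) unfolding bij_betw_def by blast
  thus "1 \<le> T x" "T x \<le> card B" by auto
qed

lemma SYT_row: "T \<in> SYT B \<Longrightarrow> (r, c) \<in> B \<Longrightarrow> (r, c') \<in> B \<Longrightarrow> c < c' \<Longrightarrow> T (r, c) < T (r, c')"
  unfolding SYT_def by blast

lemma SYT_col: "T \<in> SYT B \<Longrightarrow> (r, c) \<in> B \<Longrightarrow> (r', c) \<in> B \<Longrightarrow> r < r' \<Longrightarrow> T (r, c) < T (r', c)"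
  unfolding SYT_def by blast

lemma SYT_inj: "T \<in> SYT B \<Longrightarrow> inj_on T B"
  unfolding SYT_def bij_betw_def by blast

lemma max_pos:
  assumes T: "T \<in> SYT (skew_shape [n, k] [j])" and x: "x \<in> skew_shape [n, k] [j]"
    and Tx: "T x = card (skew_shape [n, k] [j])"
  shows "(x = (0, n - 1) \<and> j < n) \<or> (x = (1, k - 1) \<and> 0 < k)"
proof -
  obtain r c where xrc: "x = (r, c)" by (cases x)
  have "(r = 0 \<and> j \<le> c \<and> c < n) \<or> (r = 1 \<and> c < k)" using x unfolding xrc mem_Bs .
  thus ?thesis
  proof
    assume a: "r = 0 \<and> j \<le> c \<and> c < n"
    have "c = n - 1"
    proof (rule ccontr)
      assume "c \<noteq> n - 1"
      hence "(0, c + 1) \<in> skew_shape [n, k] [j]" using a by (simp add: mem_Bs, arith)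
      hence "T (0, c) < T (0, c + 1)" "T (0, c+1) \<le> card (skew_shape [n, k] [j])"
        using SYT_row[OF T, of 0 c "c+1"] SYT_range[OF T] x a xrc by auto
      thus False using Tx xrc a by simp
    qed
    thus ?thesis using a xrc by auto
  next
    assume a: "r = 1 \<and> c < k"
    have "c = k - 1"
    proof (rule ccontr)
      assume "c \<noteq> k - 1"
      hence "(1, c + 1) \<in> skew_shape [n, k] [j]" using a by (simp add: mem_Bs, arith)
      hence "T (1, c) < T (1, c + 1)" "T (1, c+1) \<le> card (skew_shape [n, k] [j])"
        using SYT_row[OF T, of 1 c "c+1"] SYT_range[OF T] x a xrc by auto
      thus False using Tx xrc a by simp
    qed
    thus ?thesis using a xrc by auto
  qed
qed

lemma max_exists:
  assumes T: "T \<in> SYT B" and "1 \<le> card B"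
  shows "\<exists>x\<in>B. T x = card B"
proof -
  have "bij_betw T B {1..card B}" using T unfolding SYT_def by blast
  hence "card B \<in> T ` B" using assms(2) unfolding bij_betw_def by auto
  thus ?thesis by auto
qed

definition FF :: "nat \<Rightarrow> nat \<Rightarrow> nat \<Rightarrow> nat \<Rightarrow> int poly" where
  "FF j n k i = (\<Sum>T\<in>{T\<in>SYT (skew_shape [n, k] [j]). des (skew_shape [n, k] [j]) T = i}.
       monom 1 (maj (skew_shape [n, k] [j]) T))"

definition TT :: "nat \<Rightarrow> nat \<Rightarrow> nat \<Rightarrow> nat \<Rightarrow> int poly" where
  "TT j n k i = (\<Sum>T\<in>{T\<in>SYT (skew_shape [n, k] [j]). des (skew_shape [n, k] [j]) T = i
        \<and> j < n \<and> T (0, n - 1) = card (skew_shape [n, k] [j])}.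
       monom 1 (maj (skew_shape [n, k] [j]) T))"

definition BB :: "nat \<Rightarrow> nat \<Rightarrow> nat \<Rightarrow> nat \<Rightarrow> int poly" where
  "BB j n k i = (\<Sum>T\<in>{T\<in>SYT (skew_shape [n, k] [j]). des (skew_shape [n, k] [j]) T = i
        \<and> 0 < k \<and> T (1, k - 1) = card (skew_shape [n, k] [j])}.
       monom 1 (maj (skew_shape [n, k] [j]) T))"

lemma f_skew_FF: "f_skew [n, k] [j] i = FF j n k i"
  unfolding f_skew_def FF_def Let_def ..

lemma FF_split:
  assumes "j < n \<or> 0 < k"
  shows "FF j n k i = TT j n k i + BB j n k i"
proof -
  let ?B = "skew_shape [n, k] [j]"
  have fS: "finite (SYT ?B)" by (rule finite_SYT[OF finite_Bs])
  have c1: "1 \<le> card ?B" using assms unfolding card_Bs by auto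
  have eq: "{T\<in>SYT ?B. des ?B T = i} =
     {T\<in>SYT ?B. des ?B T = i \<and> j < n \<and> T (0, n - 1) = card ?B} \<union>
     {T\<in>SYT ?B. des ?B T = i \<and> 0 < k \<and> T (1, k - 1) = card ?B}"
  proof (rule set_eqI, rule iffI)
    fix T assume "T \<in> {T\<in>SYT ?B. des ?B T = i}"
    hence T: "T \<in> SYT ?B" "des ?B T = i" by blast+
    obtain x where x: "x \<in> ?B" "T x = card ?B" using max_exists[OF T(1) c1] by blast
    from max_pos[OF T(1) x] x T show "T \<in> {T\<in>SYT ?B. des ?B T = i \<and> j < n \<and> T (0, n - 1) = card ?B} \<union>
     {T\<in>SYT ?B. des ?B T = i \<and> 0 < k \<and> T (1, k - 1) = card ?B}" by blast
  qed blast
  have disj: "{T\<in>SYT ?B. des ?B T = i \<and> j < n \<and> T (0, n - 1) = card ?B} \<inter>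
     {T\<in>SYT ?B. des ?B T = i \<and> 0 < k \<and> T (1, k - 1) = card ?B} = {}"
  proof (rule ccontr)
    assume "\<not> ?thesis"
    then obtain T where T: "T \<in> SYT ?B" "j < n" "T (0, n - 1) = card ?B" "0 < k" "T (1, k - 1) = card ?B" by blast
    have m: "(0, n - 1) \<in> ?B" "(1, k - 1) \<in> ?B" using T by (auto simp: mem_Bs)
    have "(0::nat, n - 1) = (1, k - 1)" using inj_onD[OF SYT_inj[OF T(1)] _ m] T by simp
    thus False by simp
  qed
  show ?thesis unfolding FF_def TT_def BB_def eq
    by (rule sum.union_disjoint) (use fS disj in auto)
qed




lemma descents_fin: "finite (descents B T)"
proof -
  have "descents B T \<subseteq> {..card B}" unfolding descents_def by auto
  thus ?thesis by (rule finite_subset) simp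
qed

lemma descents_le: "m \<in> descents B T \<Longrightarrow> m + 1 \<le> card B"
  unfolding descents_def by blast

lemma TT_rec:
  assumes jn: "j < n" and kn: "k < n"
  shows "TT j n k i = FF j (n - 1) k i"
proof -
  define B where "B = skew_shape [n - 1, k] [j]"
  define b where "b = (0::nat, n - 1)"
  have BB: "skew_shape [n, k] [j] = insert b B" unfolding B_def b_def by (rule Bs_top[OF jn])
  have fB: "finite B" unfolding B_def by (rule finite_Bs)
  have bB: "b \<notin> B" unfolding B_def b_def by (rule Bs_top_notin)
  have corner: "\<And>x. x \<in> B \<Longrightarrow> \<not>(fst x = fst b \<and> snd x > snd b) \<and> \<not>(snd x = snd b \<and> fst x > fst b)"
    unfolding B_def b_def by (rule corner_top[OF kn])
  have "TT j n k i = (\<Sum>T\<in>{T\<in>SYT (insert b B). T b = card (insert b B) \<and> des (insert b B) T = i}.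
       monom 1 (maj (insert b B) T))"
    unfolding TT_def BB using jn b_def by (intro sum.cong) auto
  also have "\<dots> = (\<Sum>T\<in>{T\<in>SYT B. des (insert b B) (T(b:= Suc (card B))) = i}. monom 1 (maj (insert b B) (T(b:= Suc (card B)))))"
    by (rule gen_sum[OF fB bB corner])
  also have "\<dots> = (\<Sum>T\<in>{T\<in>SYT B. des B T = i}. monom 1 (maj B T))"
  proof -
    have D: "descents (insert b B) (T(b:= Suc (card B))) = descents B T" if T: "T \<in> SYT B" for T
    proof -
      have T': "T(b:= Suc (card B)) \<in> SYT (insert b B)" by (rule SYT_add[OF fB bB T corner])
      show ?thesis unfolding descents_add[OF fB bB T T'] using b_def by simp
    qed
    have S: "{T\<in>SYT B. des (insert b B) (T(b:= Suc (card B))) = i} = {T\<in>SYT B. des B T = i}"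
    proof (rule set_eqI)
      fix T show "T \<in> {T\<in>SYT B. des (insert b B) (T(b:= Suc (card B))) = i} \<longleftrightarrow> T \<in> {T\<in>SYT B. des B T = i}"
        by (cases "T \<in> SYT B") (simp_all add: D des_def)
    qed
    show ?thesis unfolding S by (rule sum.cong) (simp_all add: maj_def D)
  qed
  finally show ?thesis unfolding FF_def B_def .
qed

lemma TT_zero:
  assumes "\<not> (j < n \<and> k < n)" and "k \<le> n"
  shows "TT j n k i = 0"
proof -
  let ?B = "skew_shape [n, k] [j]"
  have E: "{T\<in>SYT ?B. des ?B T = i \<and> j < n \<and> T (0, n - 1) = card ?B} = {}"
  proof (rule ccontr)
    assume "\<not> ?thesis"
    then obtain T where T: "T \<in> SYT ?B" "j < n" "T (0, n - 1) = card ?B" by blast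
    have kn: "k = n" using assms T(2) by auto
    have m: "(0, n - 1) \<in> ?B" "(1, n - 1) \<in> ?B" using T(2) kn by (auto simp: mem_Bs)
    have "T (0, n - 1) < T (1, n - 1)" by (rule SYT_col[OF T(1) m]) simp
    moreover have "T (1, n - 1) \<le> card ?B" by (rule SYT_range[OF T(1) m(2)])
    ultimately show False using T(3) by simp
  qed
  show ?thesis unfolding TT_def E by simp
qed




lemma rowtop:
  assumes T: "T \<in> SYT (skew_shape [n, k] [j])"
  shows "(1 \<le> card (skew_shape [n, k] [j]) \<and> row_of (skew_shape [n, k] [j]) T (card (skew_shape [n, k] [j])) < 1)
     \<longleftrightarrow> (j < n \<and> T (0, n - 1) = card (skew_shape [n, k] [j]))"
proof
  let ?B = "skew_shape [n, k] [j]"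
  assume a: "1 \<le> card ?B \<and> row_of ?B T (card ?B) < 1"
  have bij: "bij_betw T ?B {1..card ?B}" using T unfolding SYT_def by blast
  have mi: "card ?B \<in> T ` ?B" using bij a unfolding bij_betw_def by auto
  define x where "x = inv_into ?B T (card ?B)"
  have xB: "x \<in> ?B" unfolding x_def by (rule inv_into_into[OF mi])
  have Tx: "T x = card ?B" unfolding x_def by (rule f_inv_into_f[OF mi])
  have fx: "fst x = 0" using a unfolding row_of_def x_def by simp
  from max_pos[OF T xB Tx] fx have "x = (0, n - 1) \<and> j < n" by auto
  thus "j < n \<and> T (0, n - 1) = card ?B" using Tx by simp
next
  let ?B = "skew_shape [n, k] [j]"
  assume a: "j < n \<and> T (0, n - 1) = card ?B"
  have m: "(0, n - 1) \<in> ?B" using a by (simp add: mem_Bs, arith)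
  have "1 \<le> T (0, n - 1)" by (rule SYT_range[OF T m])
  hence c1: "1 \<le> card ?B" using a by simp
  have "inv_into ?B T (card ?B) = (0, n - 1)"
    by (rule inv_into_f_eq[OF SYT_inj[OF T] m]) (use a in simp)
  thus "1 \<le> card ?B \<and> row_of ?B T (card ?B) < 1" using c1 unfolding row_of_def by simp
qed

lemma BB_rec:
  assumes k0: "0 < k"
  shows "BB j n k i = (FF j n (k - 1) i - TT j n (k - 1) i)
     + (if i = 0 then 0 else monom 1 (n - j + (k - 1)) * TT j n (k - 1) (i - 1))"
proof -
  define B where "B = skew_shape [n, k - 1] [j]"
  define b where "b = (1::nat, k - 1)"
  define P where "P = (\<lambda>T. j < n \<and> T (0::nat, n - 1) = card B)"
  have BBs: "skew_shape [n, k] [j] = insert b B" unfolding B_def b_def by (rule Bs_bot[OF k0])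
  have fB: "finite B" unfolding B_def by (rule finite_Bs)
  have bB: "b \<notin> B" unfolding B_def b_def by (rule Bs_bot_notin)
  have cBv: "card B = n - j + (k - 1)" unfolding B_def by (rule card_Bs)
  have corner: "\<And>x. x \<in> B \<Longrightarrow> \<not>(fst x = fst b \<and> snd x > snd b) \<and> \<not>(snd x = snd b \<and> fst x > fst b)"
    unfolding B_def b_def by (rule corner_bot)
  have fS: "finite (SYT B)" by (rule finite_SYT[OF fB])
  have Dd: "descents (insert b B) (T(b:= Suc (card B))) = descents B T \<union> (if P T then {card B} else {})"
    if T: "T \<in> SYT B" for T
  proof -
    have T': "T(b:= Suc (card B)) \<in> SYT (insert b B)" by (rule SYT_add[OF fB bB T corner])
    have "(1 \<le> card B \<and> row_of B T (card B) < fst b) \<longleftrightarrow> P T"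
      using rowtop[of T n "k - 1" j] T unfolding B_def b_def P_def by simp
    thus ?thesis unfolding descents_add[OF fB bB T T'] by simp
  qed
  have nin: "card B \<notin> descents B T" for T using descents_le[of "card B" B T] by auto
  have desE: "des (insert b B) (T(b:= Suc (card B))) = des B T + (if P T then 1 else 0)"
    and majE: "maj (insert b B) (T(b:= Suc (card B))) = maj B T + (if P T then card B else 0)"
    if T: "T \<in> SYT B" for T
    unfolding des_def maj_def Dd[OF T] using nin[of T] descents_fin[of B T] by auto
  have "BB j n k i = (\<Sum>T\<in>{T\<in>SYT (insert b B). T b = card (insert b B) \<and> des (insert b B) T = i}.
       monom 1 (maj (insert b B) T))"
    unfolding BB_def BBs using k0 b_def by (intro sum.cong) auto
  also have "\<dots> = (\<Sum>T\<in>{T\<in>SYT B. des (insert b B) (T(b:= Suc (card B))) = i}. monom 1 (maj (insert b B) (T(b:= Suc (card B)))))"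
    by (rule gen_sum[OF fB bB corner])
  also have "\<dots> = (\<Sum>T\<in>{T\<in>SYT B. des (insert b B) (T(b:= Suc (card B))) = i \<and> P T}. monom 1 (maj (insert b B) (T(b:= Suc (card B)))))
    + (\<Sum>T\<in>{T\<in>SYT B. des (insert b B) (T(b:= Suc (card B))) = i \<and> \<not> P T}. monom 1 (maj (insert b B) (T(b:= Suc (card B)))))"
    by (rule sum_split[OF fS])
  also have "(\<Sum>T\<in>{T\<in>SYT B. des (insert b B) (T(b:= Suc (card B))) = i \<and> \<not> P T}. monom 1 (maj (insert b B) (T(b:= Suc (card B)))))
      = (\<Sum>T\<in>{T\<in>SYT B. des B T = i \<and> \<not> P T}. monom 1 (maj B T))"
  proof -
    have S: "{T\<in>SYT B. des (insert b B) (T(b:= Suc (card B))) = i \<and> \<not> P T} = {T\<in>SYT B. des B T = i \<and> \<not> P T}"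
    proof (rule set_eqI)
      fix T show "T \<in> {T\<in>SYT B. des (insert b B) (T(b:= Suc (card B))) = i \<and> \<not> P T} \<longleftrightarrow> T \<in> {T\<in>SYT B. des B T = i \<and> \<not> P T}"
        by (cases "T \<in> SYT B") (simp_all add: desE)
    qed
    show ?thesis unfolding S by (rule sum.cong) (simp_all add: majE)
  qed
  also have "(\<Sum>T\<in>{T\<in>SYT B. des (insert b B) (T(b:= Suc (card B))) = i \<and> P T}. monom 1 (maj (insert b B) (T(b:= Suc (card B)))))
      = (if i = 0 then 0 else monom 1 (card B) * TT j n (k - 1) (i - 1))"
  proof (cases "i = 0")
    case True
    have S: "{T\<in>SYT B. des (insert b B) (T(b:= Suc (card B))) = i \<and> P T} = {}"
      using desE True by auto
    show ?thesis unfolding S using True by simp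
  next
    case False
    have S: "{T\<in>SYT B. des (insert b B) (T(b:= Suc (card B))) = i \<and> P T} = {T\<in>SYT B. des B T = i - 1 \<and> P T}"
    proof (rule set_eqI)
      fix T show "T \<in> {T\<in>SYT B. des (insert b B) (T(b:= Suc (card B))) = i \<and> P T} \<longleftrightarrow> T \<in> {T\<in>SYT B. des B T = i - 1 \<and> P T}"
        using False by (cases "T \<in> SYT B") (auto simp add: desE)
    qed
    have "(\<Sum>T\<in>{T\<in>SYT B. des B T = i - 1 \<and> P T}. monom 1 (maj (insert b B) (T(b:= Suc (card B)))))
        = (\<Sum>T\<in>{T\<in>SYT B. des B T = i - 1 \<and> P T}. monom (1::int) (card B) * monom 1 (maj B T))"
    proof -
      have key: "monom 1 (maj (insert b B) (T(b:= Suc (card B)))) = monom (1::int) (card B) * monom 1 (maj B T)"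
        if T: "T \<in> SYT B" "P T" for T
      proof -
        have "monom (1::int) (card B) * monom 1 (maj B T) = monom (1 * 1) (card B + maj B T)" by (rule mult_monom)
        also have "\<dots> = monom 1 (maj (insert b B) (T(b:= Suc (card B))))" using T by (simp add: majE add.commute)
        finally show ?thesis by simp
      qed
      show ?thesis by (rule sum.cong[OF refl]) (use key in blast)
    qed
    also have "\<dots> = monom 1 (card B) * TT j n (k - 1) (i - 1)"
      unfolding sum_distrib_left[symmetric] TT_def P_def B_def ..
    finally show ?thesis unfolding S using False by simp
  qed
  also have "(\<Sum>T\<in>{T\<in>SYT B. des B T = i \<and> \<not> P T}. monom 1 (maj B T)) = FF j n (k - 1) i - TT j n (k - 1) i"
  proof -
    have "FF j n (k - 1) i = (\<Sum>T\<in>{T\<in>SYT B. des B T = i \<and> P T}. monom 1 (maj B T)) + (\<Sum>T\<in>{T\<in>SYT B. des B T = i \<and> \<not> P T}. monom 1 (maj B T))"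
      unfolding FF_def B_def[symmetric] by (rule sum_split[OF fS])
    moreover have "TT j n (k - 1) i = (\<Sum>T\<in>{T\<in>SYT B. des B T = i \<and> P T}. monom 1 (maj B T))"
      unfolding TT_def P_def B_def ..
    ultimately show ?thesis by simp
  qed
  finally show ?thesis unfolding cBv by simp
qed




fun gb :: "nat \<Rightarrow> nat \<Rightarrow> int poly" where
  "gb M 0 = 1"
| "gb 0 (Suc N) = 0"
| "gb (Suc M) (Suc N) = gb M N + monom 1 (Suc N) * gb M (Suc N)"

lemma gb_zero: "M < N \<Longrightarrow> gb M N = 0"
proof (induction M arbitrary: N)
  case 0 thus ?case by (cases N) auto
next
  case (Suc M) thus ?case by (cases N) auto
qed

lemma gb_diag: "gb M M = 1"
  by (induction M) (auto simp: gb_zero)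

lemma qpoch_Suc: "qpoch (Suc m) = qpoch m * (1 - monom 1 (Suc m))"
  unfolding qpoch_def by (simp add: prod.cl_ivl_Suc)

lemma qpoch_0: "qpoch 0 = 1"
  unfolding qpoch_def by simp

lemma qpoch_nz: "qpoch m \<noteq> 0"
proof (induction m)
  case 0 thus ?case by (simp add: qpoch_0)
next
  case (Suc m)
  have "coeff (1 - monom (1::int) (Suc m)) 0 = 1" by (simp add: coeff_monom)
  have "1 - monom (1::int) (Suc m) \<noteq> 0"
  proof
    assume "1 - monom (1::int) (Suc m) = 0"
    hence "coeff (1 - monom (1::int) (Suc m)) 0 = 0" by simp
    thus False using \<open>coeff (1 - monom (1::int) (Suc m)) 0 = 1\<close> by simp
  qed
  thus ?case using Suc by (simp add: qpoch_Suc)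
qed

lemma aux_ring: "((g1::'a::comm_ring_1) + m1 * g2) * (q1 * (1 - m1)) * (q3 * (1 - m2))
   = (g1 * q1 * (q3 * (1 - m2))) * (1 - m1) + m1 * (1 - m2) * (g2 * (q1 * (1 - m1)) * q3)"
  by (simp add: algebra_simps)

lemma gb_prod: "N \<le> M \<Longrightarrow> gb M N * qpoch N * qpoch (M - N) = qpoch M"
proof (induction M arbitrary: N)
  case 0 thus ?case by (simp add: qpoch_0)
next
  case (Suc M)
  note IH = Suc.IH and prems = Suc.prems
  show ?case
  proof (cases N)
    case 0 thus ?thesis by (simp add: qpoch_0)
  next
    case NS: (Suc N')
    have IH1: "gb M N' * qpoch N' * qpoch (M - N') = qpoch M" using IH prems NS by simp
    show ?thesis
    proof (cases "N' = M")
      case True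
      have "gb (Suc M) (Suc M) = 1" by (rule gb_diag)
      thus ?thesis using NS True by (simp add: qpoch_0)
    next
      case False
      hence lt: "Suc N' \<le> M" using prems NS by simp
      define D where "D = M - Suc N'"
      have IH2: "gb M (Suc N') * qpoch (Suc N') * qpoch D = qpoch M" using IH lt unfolding D_def by simp
      have e1: "M - N' = Suc D" using lt unfolding D_def by simp
      have e2: "Suc M - N = Suc D" using e1 NS by simp
      have e3: "Suc N' + Suc D = Suc M" using lt unfolding D_def by simp
      have IH1': "gb M N' * qpoch N' * (qpoch D * (1 - monom 1 (Suc D))) = qpoch M"
        using IH1 unfolding e1 qpoch_Suc .
      have IH2': "gb M (Suc N') * (qpoch N' * (1 - monom 1 (Suc N'))) * qpoch D = qpoch M"
        using IH2 unfolding qpoch_Suc .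
      have "gb (Suc M) N * qpoch N * qpoch (Suc M - N)
          = (gb M N' + monom 1 (Suc N') * gb M (Suc N')) * (qpoch N' * (1 - monom 1 (Suc N'))) * (qpoch D * (1 - monom 1 (Suc D)))"
        unfolding NS e2[unfolded NS] qpoch_Suc by simp
      also have "\<dots> = qpoch M * (1 - monom 1 (Suc N')) + monom 1 (Suc N') * (1 - monom 1 (Suc D)) * qpoch M"
        unfolding aux_ring IH1' IH2' ..
      also have "monom 1 (Suc N') * (1 - monom 1 (Suc D)) = monom 1 (Suc N') - (monom 1 (Suc M) :: int poly)"
        using e3 by (simp add: right_diff_distrib mult_monom)
      also have "qpoch M * (1 - monom 1 (Suc N')) + (monom 1 (Suc N') - monom 1 (Suc M)) * qpoch M = qpoch (Suc M)"
        by (simp add: qpoch_Suc algebra_simps)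
      finally show ?thesis .
    qed
  qed
qed

lemma gb_sym: "N \<le> M \<Longrightarrow> gb M N = gb M (M - N)"
proof -
  assume a: "N \<le> M"
  have "gb M N * (qpoch N * qpoch (M - N)) = gb M (M - N) * (qpoch N * qpoch (M - N))"
    using gb_prod[OF a] gb_prod[of "M - N" M] a by (simp add: algebra_simps)
  moreover have "qpoch N * qpoch (M - N) \<noteq> 0" using qpoch_nz by simp
  ultimately show ?thesis by simp
qed

lemma gb_pascal1: "gb (Suc A) (Suc I) - gb A (Suc I) = monom 1 (A - I) * gb A I"
proof (cases "A < I")
  case True thus ?thesis by (simp add: gb_zero)
next
  case False
  show ?thesis
  proof (cases "I = A")
    case True thus ?thesis by (simp add: gb_zero gb_diag)
  next
    case False2: False
    hence lt: "I < A" using False by simp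
    define D where "D = A - Suc I"
    have AD: "A - I = Suc D" using lt unfolding D_def by simp
    have "gb (Suc A) (Suc I) = gb (Suc A) (Suc D)" using gb_sym[of "Suc I" "Suc A"] lt AD by simp
    also have "\<dots> = gb A D + monom 1 (Suc D) * gb A (Suc D)" by simp
    also have "gb A D = gb A (Suc I)" using gb_sym[of D A] lt unfolding D_def by simp
    also have "gb A (Suc D) = gb A I" using gb_sym[of I A] lt AD by simp
    finally show ?thesis using AD by simp
  qed
qed

lemma qbinom_gb: "qbinom (int M) (int N) = gb M N"
proof (cases "N \<le> M")
  case True
  have "qpoch M = gb M N * (qpoch N * qpoch (M - N))" using gb_prod[OF True] by (simp add: algebra_simps)
  moreover have "qpoch N * qpoch (M - N) \<noteq> 0" using qpoch_nz by simp
  ultimately have "qpoch M div (qpoch N * qpoch (M - N)) = gb M N" by simp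
  moreover have "nat (int M - int N) = M - N" using True by simp
  ultimately show ?thesis unfolding qbinom_def using True by simp
next
  case False thus ?thesis unfolding qbinom_def by (simp add: gb_zero)
qed

lemma qbinom_neg: "x < 0 \<Longrightarrow> qbinom x y = 0"
  unfolding qbinom_def by simp

lemma qbinom_big: "x < y \<Longrightarrow> qbinom x y = 0"
  unfolding qbinom_def by simp

lemma qbinom_0: "qbinom x 0 = (if 0 \<le> x then 1 else 0)"
proof (cases "0 \<le> x")
  case True
  then obtain M where "x = int M" by (metis nonneg_int_cases)
  thus ?thesis using qbinom_gb[of M 0] by simp
qed (simp add: qbinom_neg)

lemma qbinom_0_top: "qbinom 0 (int i) = (if i = 0 then 1 else 0)"
  using qbinom_gb[of 0 i] by (cases i) auto

lemma qbinom_pascal1: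
  assumes "1 \<le> i"
  shows "qbinom a (int i) - qbinom (a - 1) (int i) = monom 1 (nat (a - int i)) * qbinom (a - 1) (int i - 1)"
proof (cases "1 \<le> a")
  case True
  define A where "A = nat (a - 1)"
  have A: "a = int (Suc A)" using True unfolding A_def by simp
  obtain I where I: "i = Suc I" using assms by (cases i) auto
  have nd: "nat (int A - int I) = A - I" by (cases "I \<le> A") auto
  have "qbinom a (int i) - qbinom (a - 1) (int i) = gb (Suc A) (Suc I) - gb A (Suc I)"
    using qbinom_gb[of "Suc A" "Suc I"] qbinom_gb[of A "Suc I"] A I by simp
  also have "\<dots> = monom 1 (A - I) * gb A I" by (rule gb_pascal1)
  also have "\<dots> = monom 1 (nat (a - int i)) * qbinom (a - 1) (int i - 1)"
    using qbinom_gb[of A I] A I nd by simp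
  finally show ?thesis .
next
  case False
  have "qbinom a (int i) = 0"
  proof (cases "a = 0")
    case True thus ?thesis using qbinom_0_top[of i] assms by simp
  next
    case False thus ?thesis using \<open>\<not> 1 \<le> a\<close> by (simp add: qbinom_neg)
  qed
  moreover have "qbinom (a - 1) (int i) = 0" "qbinom (a - 1) (int i - 1) = 0" using False by (simp_all add: qbinom_neg)
  ultimately show ?thesis by simp
qed




definition W :: "int \<Rightarrow> int \<Rightarrow> nat \<Rightarrow> int poly" where
  "W x y i = monom 1 (i ^ 2) * qbinom x (int i) * qbinom y (int i)"

lemma W_comm: "W x y i = W y x i"
  unfolding W_def by (simp add: algebra_simps)

lemma monom_add1: "monom (1::int) (a + b) = monom 1 a * monom 1 b"
  by (simp add: mult_monom)

lemma U:
  assumes a1: "1 \<le> a" and i1: "1 \<le> i" and e: "int e = a + b - 1"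
    and a': "a' = a - 1" and b': "b' = b - 1"
  shows "W a b i - W a' b i - W a b' i + W a' b' i = monom 1 e * W a' b' (i - 1)"
proof -
  have ii: "int (i - 1) = int i - 1" using i1 by simp
  have "W a b i - W a' b i - W a b' i + W a' b' i
      = monom 1 (i^2) * (qbinom a (int i) - qbinom (a - 1) (int i)) * (qbinom b (int i) - qbinom (b - 1) (int i))"
    unfolding W_def a' b' by (simp add: algebra_simps)
  also have "\<dots> = monom 1 (i^2) * (monom 1 (nat (a - int i)) * qbinom a' (int (i - 1))) * (monom 1 (nat (b - int i)) * qbinom b' (int (i - 1)))"
    unfolding qbinom_pascal1[OF i1] ii a' b' ..
  also have "\<dots> = monom 1 e * W a' b' (i - 1)"
  proof (cases "int i \<le> a \<and> int i \<le> b")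
    case True
    have "i^2 + nat (a - int i) + nat (b - int i) = e + (i - 1)^2"
    proof -
      have "int (i^2 + nat (a - int i) + nat (b - int i)) = int i ^ 2 + (a - int i) + (b - int i)"
        using True by simp
      also have "\<dots> = (a + b - 1) + (int i - 1)^2" by (simp add: power2_eq_square algebra_simps)
      also have "\<dots> = int (e + (i - 1)^2)" using e ii by simp
      finally show ?thesis by linarith
    qed
    hence "monom (1::int) (i^2) * monom 1 (nat (a - int i)) * monom 1 (nat (b - int i)) = monom 1 e * monom 1 ((i - 1)^2)"
      by (simp add: mult_monom)
    thus ?thesis unfolding W_def by (simp add: algebra_simps)
  next
    case False
    hence "qbinom a' (int (i - 1)) = 0 \<or> qbinom b' (int (i - 1)) = 0"
      using qbinom_big[of a' "int (i - 1)"] qbinom_big[of b' "int (i - 1)"] ii a' b' by auto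
    thus ?thesis unfolding W_def by auto
  qed
  finally show ?thesis .
qed

definition Cz :: "nat \<Rightarrow> int \<Rightarrow> int \<Rightarrow> nat \<Rightarrow> int poly" where
  "Cz j n k i = W (n - int j) k i - W (n + 1) (k - int j - 1) i"

lemma Crec:
  assumes jn: "int j < n" and k0: "0 < k" and i1: "1 \<le> i" and e: "int e = n - int j + k - 1"
  shows "Cz j n k i = Cz j (n - 1) k i + Cz j n (k - 1) i - Cz j (n - 1) (k - 1) i + monom 1 e * Cz j (n - 1) (k - 1) (i - 1)"
proof -
  have U1: "W (n - int j) k i - W (n - 1 - int j) k i - W (n - int j) (k - 1) i + W (n - 1 - int j) (k - 1) i
      = monom 1 e * W (n - 1 - int j) (k - 1) (i - 1)"
    by (rule U) (use jn i1 e in auto)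
  have U2: "W (n + 1) (k - int j - 1) i - W (n - 1 + 1) (k - int j - 1) i - W (n + 1) (k - 1 - int j - 1) i + W (n - 1 + 1) (k - 1 - int j - 1) i
      = monom 1 e * W (n - 1 + 1) (k - 1 - int j - 1) (i - 1)"
    by (rule U) (use jn i1 e in auto)
  show ?thesis unfolding Cz_def using U1 U2 by (simp add: algebra_simps)
qed

lemma W0: "W x y 0 = (if 0 \<le> x \<and> 0 \<le> y then 1 else 0)"
  unfolding W_def by (simp add: qbinom_0)

lemma Crec0:
  assumes jn: "int j < n" and k0: "0 < k"
  shows "Cz j n k 0 = Cz j (n - 1) k 0 + Cz j n (k - 1) 0 - Cz j (n - 1) (k - 1) 0"
  unfolding Cz_def W0 using jn k0 by simp

lemma Csym: "Cz j (n - 1) n i = 0"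
proof -
  have "W (n - 1 - int j) n i = W (n - 1 + 1) (n - int j - 1) i"
    using W_comm[of "n - 1 - int j" n i] by (simp add: algebra_simps)
  thus ?thesis unfolding Cz_def by simp
qed

lemma Cbase_top:
  assumes "0 \<le> k" "k \<le> int j"
  shows "Cz j (int j) k i = (if i = 0 then 1 else 0)"
proof -
  have "W (int j + 1) (k - int j - 1) i = 0" unfolding W_def using assms by (simp add: qbinom_neg)
  moreover have "W (int j - int j) k i = (if i = 0 then 1 else 0)"
    unfolding W_def using qbinom_0_top[of i] assms by (simp add: qbinom_0)
  ultimately show ?thesis unfolding Cz_def by simp
qed

lemma Cbase_k0:
  assumes "int j \<le> n"
  shows "Cz j n 0 i = (if i = 0 then 1 else 0)"
proof -
  have "W (n + 1) (0 - int j - 1) i = 0" unfolding W_def by (simp add: qbinom_neg)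
  moreover have "W (n - int j) 0 i = (if i = 0 then 1 else 0)"
    unfolding W_def using qbinom_0_top[of i] assms by (simp add: qbinom_0)
  ultimately show ?thesis unfolding Cz_def by simp
qed




lemma FF_base: "FF j j 0 i = (if i = 0 then 1 else 0)"
proof -
  have B0: "skew_shape [j, 0] [j] = {}"
  proof (rule set_eqI)
    fix x :: "nat \<times> nat" show "x \<in> skew_shape [j, 0] [j] \<longleftrightarrow> x \<in> {}" by (cases x) (simp add: mem_Bs)
  qed
  have S: "SYT {} = {\<lambda>_. 0}"
  proof (rule set_eqI)
    fix T :: "nat \<times> nat \<Rightarrow> nat"
    show "T \<in> SYT {} \<longleftrightarrow> T \<in> {\<lambda>_. 0}" unfolding SYT_def by (auto simp: bij_betw_def)
  qed
  have D: "des {} T = 0" for T unfolding des_def descents_def by simp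
  have Mj: "maj {} T = 0" for T unfolding maj_def descents_def by simp
  show ?thesis unfolding FF_def B0 S using D Mj by auto
qed

lemma BB_k0: "BB j n 0 i = 0"
  unfolding BB_def by simp

lemma main_rec:
  "j \<le> n \<Longrightarrow> k \<le> n \<Longrightarrow> FF j n k i = Cz j (int n) (int k) i"
proof (induction "n + k" arbitrary: n k i rule: less_induct)
  case less
  note IH = less.hyps
  show ?case
  proof (cases "n = j \<and> k = 0")
    case True
    thus ?thesis using FF_base Cbase_top[of 0 j i] by simp
  next
    case False
    hence ne: "j < n \<or> 0 < k" using less.prems by auto
    have split: "FF j n k i = TT j n k i + BB j n k i" by (rule FF_split[OF ne])
    show ?thesis
    proof (cases "j = n")
      case True
      hence k0: "0 < k" using ne by simp
      have "TT j n k i = 0" by (rule TT_zero) (use True less.prems in auto)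
      moreover have "TT j n (k - 1) i' = 0" for i' by (rule TT_zero) (use True less.prems in auto)
      moreover have "FF j n (k - 1) i = Cz j (int n) (int (k - 1)) i"
        by (rule IH) (use k0 less.prems in auto)
      ultimately have "FF j n k i = Cz j (int n) (int (k - 1)) i"
        using split BB_rec[OF k0, of j n i] by simp
      also have "\<dots> = (if i = 0 then 1 else 0)" using Cbase_top[of "int (k - 1)" j i] True less.prems by simp
      also have "\<dots> = Cz j (int n) (int k) i" using Cbase_top[of "int k" j i] True less.prems by simp
      finally show ?thesis .
    next
      case False
      hence jn: "j < n" using less.prems by simp
      show ?thesis
      proof (cases "k = 0")
        case True
        have "TT j n k i = FF j (n - 1) k i" by (rule TT_rec) (use jn True in auto)
        also have "\<dots> = Cz j (int (n - 1)) (int k) i" by (rule IH) (use jn True in auto)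
        also have "\<dots> = (if i = 0 then 1 else 0)" using Cbase_k0[of j "int (n - 1)" i] jn True by simp
        also have "\<dots> = Cz j (int n) (int k) i" using Cbase_k0[of j "int n" i] jn True by simp
        finally show ?thesis using split True BB_k0 by simp
      next
        case False
        hence k0: "0 < k" by simp
        have nn: "int (n - 1) = int n - 1" and kk: "int (k - 1) = int k - 1" using jn k0 by auto
        have T1: "TT j n k i = Cz j (int n - 1) (int k) i"
        proof (cases "k < n")
          case True
          have "TT j n k i = FF j (n - 1) k i" by (rule TT_rec[OF jn True])
          also have "\<dots> = Cz j (int (n - 1)) (int k) i" by (rule IH) (use jn True k0 in auto)
          finally show ?thesis using nn by simp
        next
          case False
          hence "k = n" using less.prems by simp
          moreover have "TT j n k i = 0" by (rule TT_zero) (use False less.prems in auto)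
          ultimately show ?thesis using Csym[of j "int n" i] by simp
        qed
        have T2: "TT j n (k - 1) i' = Cz j (int n - 1) (int k - 1) i'" for i'
        proof -
          have "TT j n (k - 1) i' = FF j (n - 1) (k - 1) i'" by (rule TT_rec) (use jn k0 less.prems in auto)
          also have "\<dots> = Cz j (int (n - 1)) (int (k - 1)) i'" by (rule IH) (use jn k0 less.prems in auto)
          finally show ?thesis using nn kk by simp
        qed
        have F2: "FF j n (k - 1) i = Cz j (int n) (int k - 1) i"
        proof -
          have "FF j n (k - 1) i = Cz j (int n) (int (k - 1)) i" by (rule IH) (use k0 less.prems in auto)
          thus ?thesis using kk by simp
        qed
        have "FF j n k i = Cz j (int n - 1) (int k) i + (Cz j (int n) (int k - 1) i - Cz j (int n - 1) (int k - 1) i)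
             + (if i = 0 then 0 else monom 1 (n - j + (k - 1)) * Cz j (int n - 1) (int k - 1) (i - 1))"
          using split BB_rec[OF k0, of j n i] T1 T2 F2 by simp
        also have "\<dots> = Cz j (int n) (int k) i"
        proof (cases "i = 0")
          case True
          thus ?thesis using Crec0[of j "int n" "int k"] jn k0 by simp
        next
          case False
          have e: "int (n - j + (k - 1)) = int n - int j + int k - 1" using jn k0 by auto
          show ?thesis using Crec[of j "int n" "int k" i, OF _ _ _ e] jn k0 False by simp
        qed
        finally show ?thesis .
      qed
    qed
  qed
qed

theorem mainTheorem2:
  fixes n k j i :: nat
  assumes "k \<le> n" and "0 < k" and "j < n" and "1 \<le> i"
  shows "f_skew [n, k] [j] i =
     monom 1 (i ^ 2) *
       (qbinom (int n - int j) (int i) * qbinom (int k) (int i)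
        - qbinom (int n + 1) (int i) * qbinom (int k - int j - 1) (int i))"
proof -
  have "f_skew [n, k] [j] i = Cz j (int n) (int k) i"
    unfolding f_skew_FF by (rule main_rec) (use assms in auto)
  thus ?thesis unfolding Cz_def W_def by (simp add: algebra_simps)
qed


end
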